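(* For all positive integers $T$ and $k$, \[ \mathrm{LCS}_T(2T-1,\mathcal P_k)\geq k^{1/\binom{2T-1}{T}}. \]
   Context: $\mathcal{P}_k$ is the set of permutations on $k$ letters (words over $\{1,\dots,k\}$ in which each letter occurs exactly once). For a set $\mathcal W$ of words, $\mathrm{LCS}(\mathcal W)$ is the length of a longest word that is a subsequence (letters in order, not necessarily consecutive) of every word in $\mathcal W$; $\mathrm{LCS}_T(\mathcal W)=\max\mathrm{LCS}(\mathcal W')$ over subsets $\mathcal W'\subset\mathcal W$ of size $T$; and for a family $\mathcal F$, $\mathrm{LCS}_T(t,\mathcal F)=\min\mathrm{LCS}_T(\mathcal W)$ over all $t$-element subsets $\mathcal W\subset\mathcal F$. *)

theory Defs
  imports Complex_Main "HOL-Library.Sublist" "HOL-Library.Extended_Real"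
begin

definition perms :: "nat \<Rightarrow> nat list set" where
  "perms k = {w. distinct w \<and> set w = {1..k}}"

definition LCS :: "'a list set \<Rightarrow> nat" where
  "LCS W = Max {length u | u. \<forall>w\<in>W. subseq u w}"

definition LCS_T :: "nat \<Rightarrow> 'a list set \<Rightarrow> nat" where
  "LCS_T T W = Max {LCS W' | W'. W' \<subseteq> W \<and> card W' = T}"

text \<open>LCS_T(t,F): minimum of LCS_T over t-element subsets of F
  (as an extended real; the minimum over the empty family is +infinity).\<close>
definition LCS_T_fam :: "nat \<Rightarrow> nat \<Rightarrow> 'a list set \<Rightarrow> ereal" where
  "LCS_T_fam T t F = (INF W \<in> {W. W \<subseteq> F \<and> card W = t}. ereal (real (LCS_T T W)))"

end

theory Submission imports Defs "HOL-Library.FuncSet" begin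

definition before :: "nat list \<Rightarrow> nat \<Rightarrow> nat \<Rightarrow> bool" where
  "before w x y \<longleftrightarrow> (\<exists>a b. w = a @ x # b \<and> y \<in> set b)"

lemma before_cases:
  assumes "x \<in> set w" "y \<in> set w" "x \<noteq> y"
  shows "before w x y \<or> before w y x"
proof -
  obtain a b where w: "w = a @ x # b" using assms(1) split_list by metis
  show ?thesis
  proof (cases "y \<in> set b")
    case True
    hence "before w x y" unfolding before_def using w by (intro exI[of _ a] exI[of _ b]) simp
    thus ?thesis by blast
  next
    case False
    then have "y \<in> set a" using assms w by auto
    then obtain c d where "a = c @ y # d" using split_list by metis
    then have "w = c @ y # (d @ x # b)" using w by simp
    then have "before w y x" unfolding before_def by (intro exI[of _ c] exI[of _ "d @ x # b"]) simp
    thus ?thesis by blast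
  qed
qed

lemma subseq_last_notin:
  assumes "subseq (v @ [x]) (x # b)" "x \<notin> set b"
  shows "v = []"
proof (rule ccontr)
  assume "v \<noteq> []"
  then obtain v0 v' where v: "v = v0 # v'" by (cases v) auto
  have "subseq (v' @ [x]) b \<or> subseq ((v0 # v') @ [x]) b" using assms(1) v
    by (auto split: if_splits)
  then obtain zs where zs: "subseq (zs @ [x]) b" by blast
  have "x \<in> set (zs @ [x])" by simp
  then obtain y where "y \<in> set b" "x = y" using list_emb_set[OF zs] by blast
  thus False using assms(2) by simp
qed

lemma extend:
  assumes d: "distinct w" and s: "subseq (u @ [x]) w" and bf: "before w x y"
  shows "subseq (u @ [x, y]) w"
proof -
  obtain a b where w: "w = a @ x # b" and y: "y \<in> set b" using bf unfolding before_def by blast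
  have "subseq (u @ [x]) (a @ (x # b))" using s w by simp
  then obtain xs1 xs2 where e: "u @ [x] = xs1 @ xs2" and s1: "subseq xs1 a" and s2: "subseq xs2 (x # b)"
    by (rule subseq_appendE)
  have xa: "x \<notin> set a" "x \<notin> set b" using d w by auto
  have "xs2 \<noteq> []"
  proof
    assume "xs2 = []"
    then have sa: "subseq (u @ [x]) a" using e s1 by simp
    have xu: "x \<in> set (u @ [x])" by simp
    obtain z where "z \<in> set a" "x = z" using list_emb_set[OF sa xu] .
    then have "x \<in> set a" by simp
    thus False using xa by simp
  qed
  then obtain v z where vz: "xs2 = v @ [z]" by (cases xs2 rule: rev_exhaust) auto
  with e have "u @ [x] = (xs1 @ v) @ [z]" by simp
  hence v: "xs2 = v @ [x]" "u = xs1 @ v" using vz by auto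
  have "subseq (v @ [x]) (x # b)" using s2 unfolding v(1) .
  hence "v = []" using xa(2) by (rule subseq_last_notin)
  then have "subseq [x, y] (x # b)" using y by (simp add: subseq_singleton_left)
  then have "subseq (xs1 @ [x, y]) (a @ x # b)" using s1 by (rule list_emb_append_mono[rotated])
  thus ?thesis using v `v = []` w by simp
qed

lemma key:
  fixes W :: "nat list set"
  assumes T: "T \<ge> 1" and Wp: "W \<subseteq> perms k" and cW: "card W = 2*T - 1"
  shows "k \<le> LCS_T T W ^ ((2*T - 1) choose T)"
proof -
  define Ss where "Ss = {S. S \<subseteq> W \<and> card S = T}"
  define L where "L = LCS_T T W"
  have finW: "finite W" using cW T by (intro card_ge_0_finite) simp
  have perm: "distinct w \<and> set w = {1..k}" if "w \<in> W" for w using Wp that by (auto simp: perms_def)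
  have finSs: "finite Ss" unfolding Ss_def using finW by (auto intro: finite_subset[of _ "Pow W"])
  have LCS_le: "LCS S \<le> L" if "S \<in> Ss" for S
  proof -
    have "{LCS W' | W'. W' \<subseteq> W \<and> card W' = T} = LCS ` Ss" unfolding Ss_def by auto
    hence "finite {LCS W' | W'. W' \<subseteq> W \<and> card W' = T}" using finSs by simp
    thus ?thesis unfolding L_def LCS_T_def using that unfolding Ss_def by (intro Max_ge) auto
  qed
  define f where "f S x = Max {length u + 1 | u. \<forall>w\<in>S. subseq (u @ [x]) w}" for S and x :: nat
  have fprops: "finite {length u + 1 | u. \<forall>w\<in>S. subseq (u @ [x]) w} \<and>
      {length u + 1 | u. \<forall>w\<in>S. subseq (u @ [x]) w} \<noteq> {}"
    if S: "S \<in> Ss" and x: "x \<in> {1..k}" for S x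
  proof -
    have "S \<noteq> {}" using S T unfolding Ss_def by auto
    then obtain w0 where w0: "w0 \<in> S" by blast
    have "{length u + 1 | u. \<forall>w\<in>S. subseq (u @ [x]) w} \<subseteq> {..length w0}"
      using w0 by (auto dest!: list_emb_length)
    hence fin: "finite {length u + 1 | u. \<forall>w\<in>S. subseq (u @ [x]) w}" by (rule finite_subset) simp
    have "\<forall>w\<in>S. subseq ([] @ [x]) w"
      using S x perm unfolding Ss_def by (auto simp: subseq_singleton_left)
    hence "length ([]::nat list) + 1 \<in> {length u + 1 | u. \<forall>w\<in>S. subseq (u @ [x]) w}" by blast
    with fin show ?thesis by blast
  qed
  have frange: "f S x \<in> {1..L}" if S: "S \<in> Ss" and x: "x \<in> {1..k}" for S x
  proof -
    have "S \<noteq> {}" using S T unfolding Ss_def by auto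
    then obtain w0 where w0: "w0 \<in> S" by blast
    have fin2: "finite {length u | u. \<forall>w\<in>S. subseq u w}"
      by (rule finite_subset[of _ "{..length w0}"]) (use w0 in \<open>auto dest!: list_emb_length\<close>)
    obtain u where u: "f S x = length u + 1" "\<forall>w\<in>S. subseq (u @ [x]) w"
      using Max_in[OF fprops[OF S x, THEN conjunct1] fprops[OF S x, THEN conjunct2]]
      unfolding f_def by auto
    have "f S x \<le> LCS S" unfolding LCS_def u(1)
      using u(2) fin2 by (intro Max_ge) (auto intro!: exI[of _ "u @ [x]"])
    with LCS_le[OF S] u(1) show ?thesis by auto
  qed
  define g where "g x = restrict (\<lambda>S. f S x) Ss" for x
  have gin: "g ` {1..k} \<subseteq> PiE Ss (\<lambda>_. {1..L})"
    using frange unfolding g_def by auto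
  have sep: "g x \<noteq> g y" if x: "x \<in> {1..k}" and y: "y \<in> {1..k}"
     and c: "T \<le> card {w\<in>W. before w x y}" for x y
  proof -
    obtain S where S: "S \<subseteq> {w\<in>W. before w x y}" "card S = T"
      using obtain_subset_with_card_n[OF c] by metis
    have SS: "S \<in> Ss" using S unfolding Ss_def by auto
    obtain u where u: "f S x = length u + 1" "\<forall>w\<in>S. subseq (u @ [x]) w"
      using Max_in[OF fprops[OF SS x, THEN conjunct1] fprops[OF SS x, THEN conjunct2]]
      unfolding f_def by auto
    have "\<forall>w\<in>S. subseq ((u @ [x]) @ [y]) w"
    proof
      fix w assume w: "w \<in> S"
      have "w \<in> W" "before w x y" using w S(1) by auto
      hence "subseq (u @ [x, y]) w" using extend[of w u x y] perm u(2) w by blast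
      thus "subseq ((u @ [x]) @ [y]) w" by simp
    qed
    hence "length (u @ [x]) + 1 \<le> f S y" unfolding f_def
      using fprops[OF SS y] by (intro Max_ge) (auto intro!: exI[of _ "u @ [x]"])
    hence "f S x \<noteq> f S y" using u(1) by simp
    show ?thesis
    proof
      assume "g x = g y"
      hence "g x S = g y S" by simp
      thus False using SS \<open>f S x \<noteq> f S y\<close> by (simp add: g_def)
    qed
  qed
  have inj: "inj_on g {1..k}"
  proof (rule inj_onI, rule ccontr)
    fix x y assume x: "x \<in> {1..k}" and y: "y \<in> {1..k}" and e: "g x = g y" and ne: "x \<noteq> y"
    have "W \<subseteq> {w\<in>W. before w x y} \<union> {w\<in>W. before w y x}"
    proof
      fix w assume w: "w \<in> W"
      hence "x \<in> set w" "y \<in> set w" using perm x y by auto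
      hence "before w x y \<or> before w y x" using before_cases ne by blast
      thus "w \<in> {w\<in>W. before w x y} \<union> {w\<in>W. before w y x}" using w by blast
    qed
    hence "card W \<le> card ({w\<in>W. before w x y} \<union> {w\<in>W. before w y x})"
      using finW by (intro card_mono) auto
    also have "\<dots> \<le> card {w\<in>W. before w x y} + card {w\<in>W. before w y x}" by (rule card_Un_le)
    finally have "T \<le> card {w\<in>W. before w x y} \<or> T \<le> card {w\<in>W. before w y x}"
      using cW by linarith
    thus False
    proof
      assume "T \<le> card {w\<in>W. before w x y}"
      thus False using sep[OF x y] e by blast
    next
      assume "T \<le> card {w\<in>W. before w y x}"
      thus False using sep[OF y x] e by simp
    qed
  qed
  have k1: "k = card (g ` {1..k})" using inj by (simp add: card_image)
  have fP: "finite (PiE Ss (\<lambda>_. {1..L}))" using finSs by (simp add: finite_PiE)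
  have "card (g ` {1..k}) \<le> card (PiE Ss (\<lambda>_. {1..L}))"
    by (rule card_mono[OF fP gin])
  also have "card (PiE Ss (\<lambda>_. {1..L})) = L ^ card Ss" by (simp add: card_PiE[OF finSs])
  also have "card Ss = (2*T - 1) choose T" unfolding Ss_def using n_subsets[OF finW] cW by simp
  finally show ?thesis unfolding L_def using k1 by simp
qed

theorem theorem25:
  fixes T k :: nat
  assumes "T \<ge> 1" and "k \<ge> 1"
  shows "ereal (real k powr (1 / real ((2*T - 1) choose T))) \<le> LCS_T_fam T (2*T - 1) (perms k)"
  unfolding LCS_T_fam_def
proof (rule INF_greatest)
  fix W assume "W \<in> {W. W \<subseteq> perms k \<and> card W = 2 * T - 1}"
  hence W: "W \<subseteq> perms k" "card W = 2*T - 1" by auto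
  define N where "N = (2*T - 1) choose T"
  define L where "L = LCS_T T W"
  have kL: "k \<le> L ^ N" using key[OF assms(1) W] unfolding N_def L_def .
  have Npos: "N > 0" unfolding N_def using assms(1) by (intro zero_less_binomial) simp
  have "real k \<le> real L ^ N" using kL by (metis of_nat_le_iff of_nat_power)
  hence "real k powr (1 / real N) \<le> (real L ^ N) powr (1 / real N)"
    using assms(2) by (intro powr_mono2) auto
  also have "\<dots> = real L"
  proof -
    have "L > 0" using kL assms(2) Npos by (metis gr0I le_zero_eq not_one_le_zero power_0_left)
    hence "real L ^ N = real L powr real N" by (simp add: powr_realpow)
    thus ?thesis using Npos by (simp add: powr_powr)
  qed
  finally show "ereal (real k powr (1 / real ((2*T - 1) choose T))) \<le> ereal (real (LCS_T T W))"
    unfolding N_def L_def by simp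
qed

end
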